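(* Let $\gamma>0$, let $\mathbf{b},\tilde{\mathbf{b}}\in\mathbb{R}^m$, and let $\mathbf{u}^*_\gamma$ and $\tilde{\mathbf{u}}^*_\gamma$ be solutions of the stabilized-regularized system $$\big((\mathbf{I}+\gamma\mathbf{A}^t\mathbf{A})\mathbf{A}^t\mathbf{A}+\gamma\mathbf{L}^t\mathbf{L}\big)\mathbf{u}=(\mathbf{I}+\gamma\mathbf{A}^t\mathbf{A})\mathbf{A}^t\mathbf{c}+\gamma\mathbf{L}^t\mathbf{g}$$ with right-hand data $\mathbf{c}=\mathbf{b}$ and $\mathbf{c}=\tilde{\mathbf{b}}$ respectively (same $\mathbf{A},\mathbf{L},\mathbf{g}$). Then $$\|\mathbf{A}\mathbf{u}^*_\gamma-\mathbf{A}\tilde{\mathbf{u}}^*_\gamma\|_m\le\|(\mathbf{I}+\gamma\mathbf{A}\mathbf{A}^t)(\mathbf{b}-\tilde{\mathbf{b}})\|_m.$$ Moreover, if $m\ge n$ and $\mathbf{A}$ has full column rank $n$, then $$\|\mathbf{u}^*_\gamma-\tilde{\mathbf{u}}^*_\gamma\|_n\le\frac{1}{\sqrt{\lambda_n}}\|(\mathbf{I}+\gamma\mathbf{A}\mathbf{A}^t)(\mathbf{b}-\tilde{\mathbf{b}})\|_m,$$ where $\lambda_n>0$ is the smallest eigenvalue of $\mathbf{A}^t\mathbf{A}$.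
   Context: $\mathbf{A}\in\mathbb{R}^{m\times n}$, $\mathbf{L}\in\mathbb{R}^{p\times n}$, $\mathbf{g}\in\mathbb{R}^p$, $\mathbf{I}$ denotes identity matrices of appropriate size, $\|\cdot\|_m,\|\cdot\|_n$ are Euclidean norms. The displayed system is the normal equation of minimizing $\mathcal{J}_\gamma(\mathbf{v})=\tfrac12\|\mathbf{A}\mathbf{v}-\mathbf{c}\|_m^2-\tfrac12\|\mathbf{c}\|_m^2+\frac{\gamma}{2}\|\mathbf{A}^t\mathbf{A}\mathbf{v}-\mathbf{A}^t\mathbf{c}\|_n^2+\frac{\gamma}{2}\|\mathbf{L}\mathbf{v}-\mathbf{g}\|_p^2$ over $\mathbb{R}^n$, with $\|\cdot\|_p$ the Euclidean norm on $\mathbb{R}^p$. *)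

theory Defs
  imports "HOL-Analysis.Analysis"
begin

definition mat_eigenvalues :: "real^'n^'n \<Rightarrow> real set" where
  "mat_eigenvalues M = {l. \<exists>v. v \<noteq> 0 \<and> M *v v = l *\<^sub>R v}"

text \<open>Smallest eigenvalue (meaningful for symmetric matrices such as A^t A,
  whose eigenvalues are real and finitely many).\<close>
definition smallest_eigenvalue :: "real^'n^'n \<Rightarrow> real" where
  "smallest_eigenvalue M = Min (mat_eigenvalues M)"

definition stab_reg_solution ::
  "real \<Rightarrow> real^'n^'m \<Rightarrow> real^'n^'p \<Rightarrow> real^'p \<Rightarrow> real^'m \<Rightarrow> real^'n \<Rightarrow> bool" where
  "stab_reg_solution \<gamma> A L g c u \<longleftrightarrow>
     ((mat 1 + \<gamma> *\<^sub>R (transpose A ** A)) ** (transpose A ** A) + \<gamma> *\<^sub>R (transpose L ** L)) *v u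
     = (mat 1 + \<gamma> *\<^sub>R (transpose A ** A)) *v (transpose A *v c) + \<gamma> *\<^sub>R (transpose L *v g)"

end

theory Submission
  imports Defs
begin


lemma adj: "(x::real^'n) \<bullet> (transpose B *v y) = (B *v x) \<bullet> (y::real^'m)"
  by (metis inner_commute dot_lmul_matrix transpose_matrix_vector)

lemma part1:
  fixes A :: "real^'n^'m" and L :: "real^'n^'p" and g :: "real^'p"
    and b b' :: "real^'m" and u u' :: "real^'n" and \<gamma> :: real
  assumes "\<gamma> > 0"
    and h1: "stab_reg_solution \<gamma> A L g b u"
    and h2: "stab_reg_solution \<gamma> A L g b' u'"
  shows "norm (A *v (u - u')) \<le> norm ((mat 1 + \<gamma> *\<^sub>R (A ** transpose A)) *v (b - b'))"
proof -
  define w where "w = u - u'"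
  define d where "d = b - b'"
  define e where "e = (mat 1 + \<gamma> *\<^sub>R (A ** transpose A)) *v d"
  define M where "M = transpose A ** A"
  have eq: "((mat 1 + \<gamma> *\<^sub>R M) ** M + \<gamma> *\<^sub>R (transpose L ** L)) *v w
     = (mat 1 + \<gamma> *\<^sub>R M) *v (transpose A *v d)"
    using h1 h2 unfolding stab_reg_solution_def w_def d_def M_def
    by (simp add: matrix_vector_mult_diff_distrib algebra_simps)
  have lhs: "((mat 1 + \<gamma> *\<^sub>R M) ** M + \<gamma> *\<^sub>R (transpose L ** L)) *v w
     = M *v w + \<gamma> *\<^sub>R (M *v (M *v w)) + \<gamma> *\<^sub>R (transpose L *v (L *v w))"
    by (simp add: matrix_vector_mult_add_rdistrib scaleR_matrix_vector_assoc[symmetric]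
        matrix_vector_mul_assoc[symmetric])
  have rhs: "(mat 1 + \<gamma> *\<^sub>R M) *v (transpose A *v d) = transpose A *v e"
    unfolding e_def M_def
    by (simp add: matrix_vector_mult_add_rdistrib matrix_vector_right_distrib scaleR_matrix_vector_assoc[symmetric]
        matrix_vector_mul_assoc[symmetric] matrix_vector_mult_scaleR)
  have Mw: "w \<bullet> (M *v w) = (A *v w) \<bullet> (A *v w)"
    unfolding M_def by (simp add: matrix_vector_mul_assoc[symmetric] adj del: transpose_matrix_vector)
  have MMw: "w \<bullet> (M *v (M *v w)) = (M *v w) \<bullet> (M *v w)"
  proof -
    have tM: "transpose M = M" by (simp add: M_def matrix_transpose_mul)
    show ?thesis using adj[of w M "M *v w"] by (simp only: tM)
  qed
  have Kw: "w \<bullet> (transpose L *v (L *v w)) = (L *v w) \<bullet> (L *v w)"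
    by (simp add: adj del: transpose_matrix_vector)
  have key: "(A *v w) \<bullet> (A *v w) + \<gamma> * ((M *v w) \<bullet> (M *v w)) + \<gamma> * ((L *v w) \<bullet> (L *v w))
     = (A *v w) \<bullet> e"
  proof -
    have "w \<bullet> (((mat 1 + \<gamma> *\<^sub>R M) ** M + \<gamma> *\<^sub>R (transpose L ** L)) *v w) = w \<bullet> (transpose A *v e)"
      using eq rhs by simp
    then show ?thesis unfolding lhs using Mw MMw Kw by (simp add: inner_add_right adj del: transpose_matrix_vector)
  qed
  have "(A *v w) \<bullet> (A *v w) \<le> (A *v w) \<bullet> e"
  proof -
    have "0 \<le> \<gamma> * ((M *v w) \<bullet> (M *v w))" using assms(1) by simp
    moreover have "0 \<le> \<gamma> * ((L *v w) \<bullet> (L *v w))" using assms(1) by simp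
    ultimately show ?thesis using key by linarith
  qed
  also have "\<dots> \<le> norm (A *v w) * norm e" by (rule Cauchy_Schwarz_ineq2[THEN order_trans[OF abs_ge_self]])
  finally have "norm (A *v w) ^ 2 \<le> norm (A *v w) * norm e" by (simp add: power2_norm_eq_inner)
  then have "norm (A *v w) \<le> norm e"
  proof (cases "norm (A *v w) = 0")
    case False
    then have "0 < norm (A *v w)" by simp
    then show ?thesis using \<open>norm (A *v w) ^ 2 \<le> norm (A *v w) * norm e\<close>
      by (simp add: power2_eq_square)
  qed (simp)
  then show ?thesis unfolding w_def e_def d_def .
qed
lemma rayleigh_min:
  fixes A :: "real^'n^'m"
  obtains v where "norm v = 1" "\<And>x. norm x = 1 \<Longrightarrow> norm (A *v v)^2 \<le> norm (A *v x)^2"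
proof -
  have ne: "sphere (0::real^'n) 1 \<noteq> {}"
    using vector_choose_size[of 1] by auto
  have co: "continuous_on (sphere (0::real^'n) 1) (\<lambda>x. norm (A *v x)^2)"
    by (intro continuous_intros linear_continuous_on matrix_vector_mul_linear)
  from continuous_attains_inf[OF compact_sphere ne co] obtain v where
    "v \<in> sphere 0 1" "\<forall>y\<in>sphere 0 1. norm (A *v v)^2 \<le> norm (A *v y)^2" by blast
  then show ?thesis using that by auto
qed

lemma rayleigh_all:
  fixes A :: "real^'n^'m"
  assumes "norm v = 1" "\<And>x. norm x = 1 \<Longrightarrow> norm (A *v v)^2 \<le> norm (A *v x)^2"
  shows "norm (A *v v)^2 * norm x ^2 \<le> norm (A *v x)^2"
proof (cases "x = 0")
  case False
  define y where "y = (1 / norm x) *\<^sub>R x"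
  have "norm y = 1" using False by (simp add: y_def)
  then have "norm (A *v v)^2 \<le> norm (A *v y)^2" using assms by auto
  also have "norm (A *v y)^2 = norm (A *v x)^2 / norm x ^2"
    by (simp add: y_def matrix_vector_mult_scaleR power_divide)
  finally show ?thesis using False by (simp add: field_simps)
qed simp

lemma rayleigh_eig:
  fixes A :: "real^'n^'m"
  assumes v1: "norm v = 1" and all: "\<And>x. norm (A *v v)^2 * norm x ^2 \<le> norm (A *v x)^2"
  shows "(transpose A ** A) *v v = norm (A *v v)^2 *\<^sub>R v"
proof -
  define \<mu> where "\<mu> = norm (A *v v)^2"
  define r where "r = (transpose A ** A) *v v - \<mu> *\<^sub>R v"
  define R where "R = r \<bullet> r"
  define D where "D = (A *v r) \<bullet> (A *v r) - \<mu> * (r \<bullet> r)"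
  have vv: "v \<bullet> v = 1" using v1 by (simp add: power2_norm_eq_inner[symmetric])
  have Avv: "(A *v v) \<bullet> (A *v v) = \<mu>" by (simp add: \<mu>_def power2_norm_eq_inner)
  have cross: "(A *v v) \<bullet> (A *v r) - \<mu> * (v \<bullet> r) = R"
  proof -
    have "(A *v v) \<bullet> (A *v r) = r \<bullet> ((transpose A ** A) *v v)"
      using adj[of r A "A *v v"] by (simp add: matrix_vector_mul_assoc[symmetric] inner_commute del: transpose_matrix_vector)
    then show ?thesis by (simp add: R_def r_def inner_diff_right inner_commute algebra_simps)
  qed
  have quad: "0 \<le> 2 * t * R + t^2 * D" for t
  proof -
    have "\<mu> * ((v + t *\<^sub>R r) \<bullet> (v + t *\<^sub>R r)) \<le> (A *v (v + t *\<^sub>R r)) \<bullet> (A *v (v + t *\<^sub>R r))"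
      using all[of "v + t *\<^sub>R r"] by (simp add: \<mu>_def power2_norm_eq_inner)
    moreover have "(A *v (v + t *\<^sub>R r)) \<bullet> (A *v (v + t *\<^sub>R r)) - \<mu> * ((v + t *\<^sub>R r) \<bullet> (v + t *\<^sub>R r))
       = 2 * t * ((A *v v) \<bullet> (A *v r) - \<mu> * (v \<bullet> r)) + t^2 * D
         + ((A *v v) \<bullet> (A *v v) - \<mu> * (v \<bullet> v))"
      by (simp add: D_def matrix_vector_right_distrib matrix_vector_mult_scaleR inner_add_left inner_add_right
          inner_commute power2_eq_square algebra_simps)
    ultimately show ?thesis using cross Avv vv by simp
  qed
  have "R = 0"
  proof (rule ccontr)
    assume "R \<noteq> 0"
    then have Rp: "R > 0" using R_def by (simp add: order_le_neq_trans)
    define s where "s = R / (\<bar>D\<bar> + 1)"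
    have sp: "s > 0" using Rp by (simp add: s_def)
    have "s * \<bar>D\<bar> < R" using Rp unfolding s_def by (simp add: field_simps)
    then have "s * (s * \<bar>D\<bar>) < s * R" using sp by simp
    moreover have "s^2 * D \<le> s * (s * \<bar>D\<bar>)" using sp by (simp add: power2_eq_square mult_left_mono)
    moreover have "0 \<le> 2 * (-s) * R + (-s)^2 * D" by (rule quad)
    then have "0 \<le> - (2 * (s * R)) + s^2 * D" by (simp add: power2_eq_square)
    moreover have "0 < s * R" using sp Rp by simp
    ultimately show False by linarith
  qed
  then have "r = 0" by (simp add: R_def)
  then show ?thesis by (simp add: r_def \<mu>_def)
qed

lemma eig_finite:
  fixes M :: "real^'n^'n"
  assumes sym: "transpose M = M"
  shows "finite (mat_eigenvalues M)"
proof -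
  define E where "E = mat_eigenvalues M"
  define ev where "ev l = (SOME v. v \<noteq> 0 \<and> M *v v = l *\<^sub>R v)" for l
  have evp: "ev l \<noteq> 0 \<and> M *v ev l = l *\<^sub>R ev l" if "l \<in> E" for l
  proof -
    from that obtain v where "v \<noteq> 0 \<and> M *v v = l *\<^sub>R v" by (auto simp: E_def mat_eigenvalues_def)
    then show ?thesis unfolding ev_def by (rule someI)
  qed
  have inj: "inj_on ev E"
  proof (rule inj_onI)
    fix l1 l2 assume "l1 \<in> E" "l2 \<in> E" "ev l1 = ev l2"
    then have "l1 *\<^sub>R ev l1 = l2 *\<^sub>R ev l1" "ev l1 \<noteq> 0" using evp by metis+
    then show "l1 = l2" by simp
  qed
  have orth: "pairwise orthogonal (ev ` E)"
  proof (rule pairwiseI)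
    fix x y assume "x \<in> ev ` E" "y \<in> ev ` E" "x \<noteq> y"
    then obtain l1 l2 where l: "l1 \<in> E" "l2 \<in> E" "x = ev l1" "y = ev l2" by auto
    with \<open>x \<noteq> y\<close> have ne: "l1 \<noteq> l2" by auto
    have "l1 * (x \<bullet> y) = (M *v x) \<bullet> y" using evp[OF l(1)] l(3) by simp
    also have "\<dots> = x \<bullet> (transpose M *v y)" by (simp only: adj)
    also have "\<dots> = l2 * (x \<bullet> y)" using evp[OF l(2)] l(4) sym by simp
    finally have "(l1 - l2) * (x \<bullet> y) = 0" by (simp add: algebra_simps)
    then show "orthogonal x y" using ne by (simp add: orthogonal_def)
  qed
  have "0 \<notin> ev ` E" using evp by auto
  then have "independent (ev ` E)" using orth pairwise_orthogonal_independent by blast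
  then have "finite (ev ` E)" using independent_bound by blast
  then show ?thesis using finite_imageD inj E_def by blast
qed

lemma part2:
  fixes A :: "real^'n^'m"
  assumes rk: "rank A = CARD('n)"
  shows "smallest_eigenvalue (transpose A ** A) > 0 \<and>
     (\<forall>x. smallest_eigenvalue (transpose A ** A) * norm x ^ 2 \<le> norm (A *v x) ^ 2)"
proof -
  define M where "M = transpose A ** A"
  obtain v where v1: "norm v = 1" and mn: "\<And>x. norm x = 1 \<Longrightarrow> norm (A *v v)^2 \<le> norm (A *v x)^2"
    using rayleigh_min[of A] by blast
  define \<mu> where "\<mu> = norm (A *v v)^2"
  have all: "\<And>x. \<mu> * norm x ^2 \<le> norm (A *v x)^2"
    unfolding \<mu>_def using rayleigh_all[OF v1 mn] by blast
  have eig: "M *v v = \<mu> *\<^sub>R v" unfolding M_def \<mu>_def using rayleigh_eig[OF v1 all[unfolded \<mu>_def]] .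
  have v0: "v \<noteq> 0" using v1 by auto
  have mem: "\<mu> \<in> mat_eigenvalues M" using eig v0 by (auto simp: mat_eigenvalues_def)
  have ge: "\<mu> \<le> l" if "l \<in> mat_eigenvalues M" for l
  proof -
    from that obtain x where x: "x \<noteq> 0" "M *v x = l *\<^sub>R x" by (auto simp: mat_eigenvalues_def)
    have "x \<bullet> (M *v x) = (A *v x) \<bullet> (A *v x)"
      unfolding M_def by (simp add: matrix_vector_mul_assoc[symmetric] adj del: transpose_matrix_vector)
    then have "l * norm x ^ 2 = norm (A *v x) ^ 2" using x by (simp add: power2_norm_eq_inner)
    then have "\<mu> * norm x ^ 2 \<le> l * norm x ^ 2" using all[of x] by simp
    moreover have "norm x ^ 2 > 0" using x by simp
    ultimately show ?thesis by simp
  qed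
  have sym: "transpose M = M" by (simp add: M_def matrix_transpose_mul)
  have fin: "finite (mat_eigenvalues M)" by (rule eig_finite[OF sym])
  have se: "smallest_eigenvalue M = \<mu>"
    unfolding smallest_eigenvalue_def using fin mem ge by (intro Min_eqI) auto
  have inj: "inj ((*v) A)" using rk full_rank_injective by blast
  have "A *v v \<noteq> 0" using inj v0 by (metis injD matrix_vector_mult_0_right)
  then have "\<mu> > 0" by (simp add: \<mu>_def)
  then show ?thesis using se all M_def by simp
qed


theorem theorem3:
  fixes A :: "real^'n^'m" and L :: "real^'n^'p" and g :: "real^'p"
    and b b' :: "real^'m" and u u' :: "real^'n" and \<gamma> :: real
  assumes "\<gamma> > 0"
    and "stab_reg_solution \<gamma> A L g b u"
    and "stab_reg_solution \<gamma> A L g b' u'"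
  shows "norm (A *v u - A *v u') \<le> norm ((mat 1 + \<gamma> *\<^sub>R (A ** transpose A)) *v (b - b'))
    \<and> (CARD('m) \<ge> CARD('n) \<and> rank A = CARD('n) \<longrightarrow>
         smallest_eigenvalue (transpose A ** A) > 0 \<and>
         norm (u - u') \<le> 1 / sqrt (smallest_eigenvalue (transpose A ** A))
                        * norm ((mat 1 + \<gamma> *\<^sub>R (A ** transpose A)) *v (b - b')))"
proof -
  define e where "e = norm ((mat 1 + \<gamma> *\<^sub>R (A ** transpose A)) *v (b - b'))"
  have p1: "norm (A *v (u - u')) \<le> e" unfolding e_def using part1[OF assms] .
  have "CARD('m) \<ge> CARD('n) \<and> rank A = CARD('n) \<longrightarrow>
         smallest_eigenvalue (transpose A ** A) > 0 \<and>
         norm (u - u') \<le> 1 / sqrt (smallest_eigenvalue (transpose A ** A)) * e"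
  proof
    assume "CARD('m) \<ge> CARD('n) \<and> rank A = CARD('n)"
    then have rk: "rank A = CARD('n)" by simp
    define lam where "lam = smallest_eigenvalue (transpose A ** A)"
    have lp: "lam > 0" and al: "lam * norm (u - u') ^ 2 \<le> norm (A *v (u - u')) ^ 2"
      using part2[OF rk] unfolding lam_def by auto
    have "sqrt lam * norm (u - u') = sqrt (lam * norm (u - u') ^ 2)"
      by (simp add: real_sqrt_mult)
    also have "\<dots> \<le> sqrt (norm (A *v (u - u')) ^ 2)" using al by (rule real_sqrt_le_mono)
    also have "\<dots> = norm (A *v (u - u'))" by simp
    also have "\<dots> \<le> e" by (rule p1)
    finally have "sqrt lam * norm (u - u') \<le> e" .
    moreover have "sqrt lam > 0" using lp by simp
    ultimately have "norm (u - u') \<le> e / sqrt lam" by (simp add: pos_le_divide_eq mult.commute)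
    then show "smallest_eigenvalue (transpose A ** A) > 0 \<and>
         norm (u - u') \<le> 1 / sqrt (smallest_eigenvalue (transpose A ** A)) * e"
      using lp unfolding lam_def by simp
  qed
  moreover have "A *v u - A *v u' = A *v (u - u')" by (simp add: matrix_vector_mult_diff_distrib)
  ultimately show ?thesis using p1 unfolding e_def by simp
qed

end
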